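(* Let $A$ be an $m\times n$ matrix with entries in $[-1,1]$, no zero column, and at most $L$ nonzero entries in each row, and let $H$ be the smallest absolute value of a nonzero entry of $A$. Then the expected shuffle size of DIMSUM with parameter $\gamma$ (the expected total number of emissions) is at most $\gamma\, n L/H^2$; in particular it is $O(nL\gamma/H^2)$, independent of $m$.
   Context: Let $A=(a_{ki})$ be an $m\times n$ real matrix with rows $r_1,\dots,r_m$ and columns $c_1,\dots,c_n$; $\|c_i\|$ is the Euclidean norm of column $i$ (assumed nonzero). DIMSUM with parameter $\gamma>0$ is the following randomized procedure. For each pair of distinct column indices $(i,j)$ set $p_{ij}=\min\!\left(1,\frac{\gamma}{\|c_i\|\|c_j\|}\right)$. For each row $k$ and each pair $(i,j)$ with $a_{ki}a_{kj}\neq 0$, independently (over all $k$ and all pairs) with probability $p_{ij}$ the value $a_{ki}a_{kj}$ is emitted to key $(i,j)$ (one "emission"). The shuffle size is the total number of emissions. *)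

theory Defs
  imports "HOL-Probability.Probability"
begin

text \<open>An m x n real matrix is represented as A :: nat => nat => real, with
  entry a_ki = A k i for k < m (rows) and i < n (columns).\<close>

definition col_norm :: "(nat \<Rightarrow> nat \<Rightarrow> real) \<Rightarrow> nat \<Rightarrow> nat \<Rightarrow> real" where
  "col_norm A m i = sqrt (\<Sum>k<m. (A k i)\<^sup>2)"

definition dimsum_prob :: "(nat \<Rightarrow> nat \<Rightarrow> real) \<Rightarrow> nat \<Rightarrow> real \<Rightarrow> nat \<Rightarrow> nat \<Rightarrow> real" where
  "dimsum_prob A m \<gamma> i j = min 1 (\<gamma> / (col_norm A m i * col_norm A m j))"

definition dimsum_slots :: "(nat \<Rightarrow> nat \<Rightarrow> real) \<Rightarrow> nat \<Rightarrow> nat \<Rightarrow> (nat \<times> nat \<times> nat) set" where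
  "dimsum_slots A m n = {(k, i, j). k < m \<and> i < n \<and> j < n \<and> i \<noteq> j \<and> A k i * A k j \<noteq> 0}"

text \<open>The random outcome of DIMSUM: for every slot independently, whether the value
  is emitted (with probability p_ij).\<close>
definition dimsum_outcome :: "(nat \<Rightarrow> nat \<Rightarrow> real) \<Rightarrow> nat \<Rightarrow> nat \<Rightarrow> real \<Rightarrow> (nat \<times> nat \<times> nat \<Rightarrow> bool) pmf" where
  "dimsum_outcome A m n \<gamma> =
     Pi_pmf (dimsum_slots A m n) False (\<lambda>(k, i, j). bernoulli_pmf (dimsum_prob A m \<gamma> i j))"

definition shuffle_size :: "(nat \<Rightarrow> nat \<Rightarrow> real) \<Rightarrow> nat \<Rightarrow> nat \<Rightarrow> (nat \<times> nat \<times> nat \<Rightarrow> bool) \<Rightarrow> nat" where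
  "shuffle_size A m n \<omega> = card {s \<in> dimsum_slots A m n. \<omega> s}"

definition expected_shuffle_size :: "(nat \<Rightarrow> nat \<Rightarrow> real) \<Rightarrow> nat \<Rightarrow> nat \<Rightarrow> real \<Rightarrow> real" where
  "expected_shuffle_size A m n \<gamma> =
     measure_pmf.expectation (dimsum_outcome A m n \<gamma>) (\<lambda>\<omega>. real (shuffle_size A m n \<omega>))"

end

theory Submission
  imports Defs
begin

lemma count_bound:
  fixes P :: "nat \<Rightarrow> nat \<Rightarrow> nat \<Rightarrow> bool" and g :: "nat \<Rightarrow> real"
  assumes g: "\<And>i. 0 \<le> g i"
  shows "(\<Sum>s\<in>{(k,i,j). k < m \<and> i < n \<and> j < n \<and> P k i j}. g (fst (snd s)))
     = (\<Sum>i<n. \<Sum>k<m. g i * card {j. j < n \<and> P k i j})"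
proof -
  let ?T = "{..<m} \<times> {..<n} \<times> {..<n}"
  have sub: "{(k,i,j). k < m \<and> i < n \<and> j < n \<and> P k i j} \<subseteq> ?T" by auto
  have "(\<Sum>s\<in>{(k,i,j). k < m \<and> i < n \<and> j < n \<and> P k i j}. g (fst (snd s)))
      = (\<Sum>s\<in>?T. if case s of (k,i,j) \<Rightarrow> P k i j then g (fst (snd s)) else 0)"
    by (rule sum.mono_neutral_cong_left) (auto split: if_splits)
  also have "\<dots> = (\<Sum>k<m. \<Sum>i<n. \<Sum>j<n. if P k i j then g i else 0)"
    unfolding sum.cartesian_product by (simp add: case_prod_unfold)
  also have "\<dots> = (\<Sum>i<n. \<Sum>k<m. \<Sum>j<n. if P k i j then g i else 0)"
    by (rule sum.swap)
  also have "\<dots> = (\<Sum>i<n. \<Sum>k<m. g i * card {j. j < n \<and> P k i j})"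
  proof (intro sum.cong refl)
    fix i k
    have e: "{..<n} \<inter> Collect (P k i) = {j. j < n \<and> P k i j}" by auto
    show "(\<Sum>j<n. if P k i j then g i else 0) = g i * card {j. j < n \<and> P k i j}" by (simp add: sum.If_cases e)
  qed
  finally show ?thesis .
qed

lemma exp_card_Pi:
  fixes S :: "'a set" and q :: "'a \<Rightarrow> real"
  assumes fin: "finite S" and q: "\<And>s. s \<in> S \<Longrightarrow> 0 \<le> q s \<and> q s \<le> 1"
  shows "measure_pmf.expectation (Pi_pmf S False (\<lambda>s. bernoulli_pmf (q s)))
           (\<lambda>\<omega>. real (card {s \<in> S. \<omega> s})) = (\<Sum>s\<in>S. q s)"
proof -
  let ?P = "Pi_pmf S False (\<lambda>s. bernoulli_pmf (q s))"
  have c: "real (card {s \<in> S. \<omega> s}) = (\<Sum>s\<in>S. (if \<omega> s then 1 else 0))" for \<omega> :: "'a \<Rightarrow> bool"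
  proof -
    have "S \<inter> Collect \<omega> = {s \<in> S. \<omega> s}" by auto
    thus ?thesis using fin by (simp add: sum.If_cases)
  qed
  have i: "integrable (measure_pmf ?P) (\<lambda>\<omega>. if \<omega> s then 1 else (0::real))" for s
    by (rule measure_pmf.integrable_const_bound[where B=1]) auto
  have e: "measure_pmf.expectation ?P (\<lambda>\<omega>. if \<omega> s then 1 else (0::real)) = q s" if "s \<in> S" for s
  proof -
    have "measure_pmf.expectation ?P (\<lambda>\<omega>. if \<omega> s then 1 else (0::real))
        = measure_pmf.expectation (map_pmf (\<lambda>f. f s) ?P) (\<lambda>b. if b then 1 else (0::real))"
      by simp
    also have "map_pmf (\<lambda>f. f s) ?P = bernoulli_pmf (q s)"
      by (subst Pi_pmf_component[OF fin]) (simp add: that)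
    finally show ?thesis using q[OF that] by simp
  qed
  have "measure_pmf.expectation ?P (\<lambda>\<omega>. real (card {s \<in> S. \<omega> s}))
      = measure_pmf.expectation ?P (\<lambda>\<omega>. \<Sum>s\<in>S. (if \<omega> s then 1 else 0))"
    by (simp only: c)
  also have "\<dots> = (\<Sum>s\<in>S. measure_pmf.expectation ?P (\<lambda>\<omega>. if \<omega> s then 1 else (0::real)))"
    by (rule Bochner_Integration.integral_sum) (use i in auto)
  also have "\<dots> = (\<Sum>s\<in>S. q s)" by (rule sum.cong) (auto simp: e)
  finally show ?thesis .
qed

lemma amgm_inv:
  fixes a b g :: real
  assumes "a > 0" "b > 0" "g > 0"
  shows "g / (a * b) \<le> g / 2 * (1 / a\<^sup>2 + 1 / b\<^sup>2)"
proof -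
  have "0 \<le> (1/a - 1/b)\<^sup>2" by simp
  hence "(1/a) * (1/b) \<le> (1/a^2 + 1/b^2) / 2" by (simp add: power2_eq_square algebra_simps)
  hence "g * ((1/a) * (1/b)) \<le> g * ((1/a^2 + 1/b^2) / 2)"
    using assms by (intro mult_left_mono) auto
  thus ?thesis by simp
qed

theorem theorem4:
  fixes A :: "nat \<Rightarrow> nat \<Rightarrow> real" and m n L :: nat and \<gamma> H :: real
  assumes entries: "\<And>k i. k < m \<Longrightarrow> i < n \<Longrightarrow> \<bar>A k i\<bar> \<le> 1"
    and no_zero_col: "\<And>i. i < n \<Longrightarrow> \<exists>k<m. A k i \<noteq> 0"
    and row_sparse: "\<And>k. k < m \<Longrightarrow> card {i. i < n \<and> A k i \<noteq> 0} \<le> L"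
    and H_def: "H = Min {\<bar>A k i\<bar> | k i. k < m \<and> i < n \<and> A k i \<noteq> 0}"
    and gamma_pos: "\<gamma> > 0"
  shows "expected_shuffle_size A m n \<gamma> \<le> \<gamma> * real n * real L / H\<^sup>2"
proof (cases "n = 0")
  case True
  then have "dimsum_slots A m n = {}" by (auto simp: dimsum_slots_def)
  then show ?thesis using True by (simp add: expected_shuffle_size_def shuffle_size_def)
next
  case False
  define c where "c i = col_norm A m i" for i
  define S where "S = dimsum_slots A m n"
  define E where "E = {\<bar>A k i\<bar> | k i. k < m \<and> i < n \<and> A k i \<noteq> 0}"
  have "E \<subseteq> (\<lambda>(k,i). \<bar>A k i\<bar>) ` ({..<m} \<times> {..<n})" unfolding E_def by auto
  hence finE: "finite E" by (rule finite_subset) auto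
  obtain k0 where "k0 < m" "A k0 0 \<noteq> 0" using no_zero_col False by blast
  hence Ene: "E \<noteq> {}" unfolding E_def using False by blast
  have Hle: "H \<le> \<bar>A k i\<bar>" if "k < m" "i < n" "A k i \<noteq> 0" for k i
    unfolding H_def using that finE unfolding E_def by (intro Min_le) auto
  have "H \<in> E" unfolding H_def E_def[symmetric] using finE Ene by (rule Min_in)
  hence Hpos: "H > 0" unfolding E_def by auto
  define nz where "nz i = card {k. k < m \<and> A k i \<noteq> 0}" for i
  have csq: "(c i)\<^sup>2 = (\<Sum>k<m. (A k i)\<^sup>2)" for i
    unfolding c_def col_norm_def by (simp add: sum_nonneg)
  have nzH: "real (nz i) * H\<^sup>2 \<le> (c i)\<^sup>2" if "i < n" for i
  proof -
    have "real (nz i) * H\<^sup>2 = (\<Sum>k\<in>{k. k < m \<and> A k i \<noteq> 0}. H\<^sup>2)" by (simp add: nz_def)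
    also have "\<dots> \<le> (\<Sum>k\<in>{k. k < m \<and> A k i \<noteq> 0}. (A k i)\<^sup>2)"
    proof (rule sum_mono)
      fix k assume "k \<in> {k. k < m \<and> A k i \<noteq> 0}"
      hence "H \<le> \<bar>A k i\<bar>" using Hle that by auto
      thus "H\<^sup>2 \<le> (A k i)\<^sup>2" using Hpos
        by (metis abs_of_pos abs_le_square_iff)
    qed
    also have "\<dots> \<le> (\<Sum>k<m. (A k i)\<^sup>2)" by (rule sum_mono2) auto
    finally show ?thesis by (simp add: csq)
  qed
  have nzpos: "nz i \<ge> 1" if iln: "i < n" for i
  proof -
    obtain k where "k < m" "A k i \<noteq> 0" using no_zero_col[OF iln] by blast
    hence "{k. k < m \<and> A k i \<noteq> 0} \<noteq> {}" by blast
    thus ?thesis unfolding nz_def by (simp add: Suc_le_eq card_gt_0_iff)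
  qed
  have cpos: "c i > 0" if "i < n" for i
  proof -
    have "0 < real (nz i) * H\<^sup>2" using nzpos[OF that] Hpos by simp
    hence "0 < (c i)\<^sup>2" using nzH[OF that] by linarith
    moreover have "c i \<ge> 0" unfolding c_def col_norm_def by (simp add: sum_nonneg)
    ultimately show ?thesis by (metis less_eq_real_def power_zero_numeral zero_less_power2)
  qed
  have gb: "real L / (c i)\<^sup>2 * real (nz i) \<le> real L / H\<^sup>2" if "i < n" for i
  proof -
    have "real L * (real (nz i) * H\<^sup>2) \<le> real L * (c i)\<^sup>2"
      using nzH[OF that] by (intro mult_left_mono) auto
    thus ?thesis using cpos[OF that] Hpos by (simp add: field_simps)
  qed
  have finS: "finite S"
  proof (rule finite_subset)
    show "S \<subseteq> {..<m} \<times> {..<n} \<times> {..<n}" unfolding S_def dimsum_slots_def by auto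
  qed auto
  define q where "q = (\<lambda>(k::nat, i::nat, j::nat). dimsum_prob A m \<gamma> i j)"
  have q01: "0 \<le> q s \<and> q s \<le> 1" for s
  proof -
    obtain k i j where s: "s = (k,i,j)" by (cases s) auto
    have "c i \<ge> 0" "c j \<ge> 0" unfolding c_def col_norm_def by (auto simp: sum_nonneg)
    thus ?thesis using gamma_pos unfolding s q_def dimsum_prob_def c_def[symmetric] by auto
  qed
  have "expected_shuffle_size A m n \<gamma> = (\<Sum>s\<in>S. q s)"
  proof -
    have "dimsum_outcome A m n \<gamma> = Pi_pmf S False (\<lambda>s. bernoulli_pmf (q s))"
      unfolding dimsum_outcome_def S_def q_def by (simp add: case_prod_unfold)
    thus ?thesis unfolding expected_shuffle_size_def shuffle_size_def S_def[symmetric]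
      using exp_card_Pi[OF finS q01] by simp
  qed
  also have "\<dots> \<le> (\<Sum>s\<in>S. \<gamma> / 2 * (1 / (c (fst (snd s)))\<^sup>2 + 1 / (c (snd (snd s)))\<^sup>2))"
  proof (rule sum_mono)
    fix s assume "s \<in> S"
    then obtain k i j where s: "s = (k,i,j)" "i < n" "j < n" unfolding S_def dimsum_slots_def by auto
    have "q s \<le> \<gamma> / (c i * c j)" unfolding s q_def dimsum_prob_def c_def by simp
    also have "\<dots> \<le> \<gamma> / 2 * (1 / (c i)\<^sup>2 + 1 / (c j)\<^sup>2)"
      using cpos s gamma_pos by (intro amgm_inv) auto
    finally show "q s \<le> \<gamma> / 2 * (1 / (c (fst (snd s)))\<^sup>2 + 1 / (c (snd (snd s)))\<^sup>2)"
      using s by simp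
  qed
  also have "\<dots> = \<gamma> / 2 * ((\<Sum>s\<in>S. 1 / (c (fst (snd s)))\<^sup>2) + (\<Sum>s\<in>S. 1 / (c (snd (snd s)))\<^sup>2))"
    by (simp only: sum.distrib[symmetric] sum_distrib_left)
  also have "(\<Sum>s\<in>S. 1 / (c (snd (snd s)))\<^sup>2) = (\<Sum>s\<in>S. 1 / (c (fst (snd s)))\<^sup>2)"
    by (rule sum.reindex_bij_witness[where i = "\<lambda>(k,i,j). (k,j,i)" and j = "\<lambda>(k,i,j). (k,j,i)"])
       (auto simp: S_def dimsum_slots_def mult.commute)
  also have "(\<Sum>s\<in>S. 1 / (c (fst (snd s)))\<^sup>2) \<le> real n * real L / H\<^sup>2"
  proof -
    have "(\<Sum>s\<in>S. 1 / (c (fst (snd s)))\<^sup>2)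
        = (\<Sum>i<n. \<Sum>k<m. 1 / (c i)\<^sup>2 * card {j. j < n \<and> (i \<noteq> j \<and> A k i * A k j \<noteq> 0)})"
      unfolding S_def dimsum_slots_def by (rule count_bound) simp
    also have "\<dots> \<le> (\<Sum>i<n. \<Sum>k<m. if A k i \<noteq> 0 then real L / (c i)\<^sup>2 else 0)"
    proof (intro sum_mono)
      fix i k assume i: "i \<in> {..<n}" and k: "k \<in> {..<m}"
      show "1 / (c i)\<^sup>2 * card {j. j < n \<and> (i \<noteq> j \<and> A k i * A k j \<noteq> 0)}
            \<le> (if A k i \<noteq> 0 then real L / (c i)\<^sup>2 else 0)"
      proof (cases "A k i = 0")
        case True thus ?thesis by simp
      next
        case False
        have "card {j. j < n \<and> (i \<noteq> j \<and> A k i * A k j \<noteq> 0)} \<le> card {j. j < n \<and> A k j \<noteq> 0}"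
          by (rule card_mono) auto
        also have "\<dots> \<le> L" using row_sparse k by auto
        finally have "real (card {j. j < n \<and> (i \<noteq> j \<and> A k i * A k j \<noteq> 0)}) \<le> real L" by simp
        hence "1 / (c i)\<^sup>2 * card {j. j < n \<and> (i \<noteq> j \<and> A k i * A k j \<noteq> 0)} \<le> 1 / (c i)\<^sup>2 * real L"
          by (intro mult_left_mono) auto
        thus ?thesis using False by simp
      qed
    qed
    also have "\<dots> = (\<Sum>i<n. real L / (c i)\<^sup>2 * real (nz i))"
    proof (rule sum.cong[OF refl])
      fix i
      have e: "{..<m} \<inter> {k. A k i \<noteq> 0} = {k. k < m \<and> A k i \<noteq> 0}" by auto
      show "(\<Sum>k<m. if A k i \<noteq> 0 then real L / (c i)\<^sup>2 else 0) = real L / (c i)\<^sup>2 * real (nz i)"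
        by (simp add: sum.If_cases e nz_def)
    qed
    also have "\<dots> \<le> (\<Sum>i<n. real L / H\<^sup>2)" by (rule sum_mono) (use gb in auto)
    finally show ?thesis by simp
  qed
  finally show ?thesis using gamma_pos by (simp add: field_simps mult_right_mono)
qed

end
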